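(* For every permutation $w$ of $\{1,\ldots,n\}$, one has $\mathrm{spec}_q\,\mathrm{wt}(w)=q^{\mathrm{inv}(w)}$, where $\mathrm{inv}(w):=|\{(i,j): i<j,\ w_i>w_j\}|$.
   Context: Work in $\mathbb{Q}(x_1,x_2,\ldots)$ with the field endomorphism $F$ given by $F(x_i)=x_{i+1}$. Define $[n]:=x_1+\cdots+x_n$, $[0]!:=1$, $[n]!:=[n]\cdot F([n-1]!)=\prod_{j=0}^{n-1}F^j[n-j]$. For a $k$-element set $S=\{i_1>\cdots>i_k\}$ of positive integers, $\mathrm{wt}(S):=\frac{\prod_{j=1}^k F^{i_j-1}[j]}{[k]!}$ ($\mathrm{wt}(\emptyset)=1$). For a permutation $w=(w_1,\ldots,w_n)$ in one-line notation, $\mathrm{wt}(w)$ is defined recursively: the empty permutation has weight $1$; otherwise let $k:=w_1-1$, $S(w):=\{i:w_i\le k\}$, $a$ the permutation of $\{1,\ldots,k\}$ listing the values $w_i\le k$ in order of increasing $i$, and $\hat b$ the permutation of $\{1,\ldots,n-k-1\}$ listing the values $w_i-k-1$ for $w_i>k+1$ in order of increasing $i$; then $\mathrm{wt}(w):=\mathrm{wt}(S(w))\,\mathrm{wt}(a)\,F^{k+1}(\mathrm{wt}(\hat b))$. The $q$-specialization $\mathrm{spec}_q$ is the substitution $x_i\mapsto q^{i-1}-q^i$ into $\mathbb{Q}(q)$ (it is defined on all the rational functions $\mathrm{wt}(w)$, whose denominators are products of sums $x_a+x_{a+1}+\cdots+x_b$, which specialize to $q^{a-1}-q^b\neq 0$).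 *)

theory Defs
  imports Main "HOL-Computational_Algebra.Polynomial" "HOL-Computational_Algebra.Fraction_Field"
begin

text \<open>An element of Q(x_1,x_2,...) built from field operations is represented by its
  evaluation map: an assignment x (with x i the value of the variable x_i, i >= 1)
  is sent to the value of the rational function.\<close>

type_synonym 'a rfun = "(nat \<Rightarrow> 'a) \<Rightarrow> 'a"

definition shiftF :: "nat \<Rightarrow> 'a rfun \<Rightarrow> 'a rfun" where
  "shiftF j f = (\<lambda>x. f (\<lambda>i. x (i + j)))"

definition qint :: "nat \<Rightarrow> 'a::field rfun" where
  "qint n = (\<lambda>x. \<Sum>i=1..n. x i)"

definition qfact :: "nat \<Rightarrow> 'a::field rfun" where
  "qfact n = (\<lambda>x. \<Prod>j<n. shiftF j (qint (n - j)) x)"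

definition wtset :: "nat set \<Rightarrow> 'a::field rfun" where
  "wtset S = (\<lambda>x. let l = rev (sorted_list_of_set S); k = length l in
     (\<Prod>j=1..k. shiftF (l ! (j - 1) - 1) (qint j) x) / qfact k x)"

text \<open>For w = v # ws we have k = v - 1, so w_i \<le> k iff w_i < v, w_i > k+1 iff w_i > v,
  and w_i - k - 1 = w_i - v.  The position of ws ! i in w is i + 2.\<close>
fun wt :: "nat list \<Rightarrow> 'a::field rfun" where
  "wt [] = (\<lambda>x. 1)"
| "wt (v # ws) = (\<lambda>x.
     wtset {i + 2 | i. i < length ws \<and> ws ! i < v} x
     * wt (filter (\<lambda>u. u < v) ws) x
     * shiftF v (wt (map (\<lambda>u. u - v) (filter (\<lambda>u. v < u) ws))) x)"

definition inv_count :: "nat list \<Rightarrow> nat" where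
  "inv_count w = card {(i, j). i < j \<and> j < length w \<and> w ! j < w ! i}"

definition qvar :: "rat poly fract" where
  "qvar = Fract [:0, 1:] 1"

text \<open>spec_q: x_i \<mapsto> q^(i-1) - q^i (value at index 0 irrelevant).\<close>
definition spec_point :: "nat \<Rightarrow> rat poly fract" where
  "spec_point i = qvar ^ (i - 1) - qvar ^ i"

end

theory Submission imports Defs begin

lemma qvar_pow: "qvar ^ j = Fract ([:0,1:] ^ j) 1"
  by (induction j) (simp_all add: qvar_def mult_fract One_fract_def)

lemma qvar_pow_ne1: "j > 0 \<Longrightarrow> qvar ^ j \<noteq> 1"
proof
  assume j: "j > 0" and "qvar ^ j = 1"
  then have "Fract ([:0,1:] ^ j) 1 = Fract (1::rat poly) 1" by (simp add: qvar_pow One_fract_def)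
  then have "([:0,1:]::rat poly) ^ j = 1" by (simp add: eq_fract)
  then have "degree (([:0,1:]::rat poly) ^ j) = 0" by simp
  moreover have "degree (([:0,1:]::rat poly) ^ j) = j" by (simp add: degree_power_eq)
  ultimately show False using j by simp
qed

lemma qvar_ne0: "qvar \<noteq> 0"
  by (simp add: qvar_def eq_fract Zero_fract_def)

lemma sp_sum: "(\<Sum>i=1..j. spec_point (i+m)) = qvar^m - qvar^(m+j)"
  by (induction j) (simp_all add: spec_point_def algebra_simps)

abbreviation P :: "nat \<Rightarrow> nat \<Rightarrow> rat poly fract" where
  "P u \<equiv> (\<lambda>i. spec_point (i+u))"

lemma qint_shift: "shiftF m (qint j) (P u) = qvar^(m+u) * (1 - qvar^j)"
proof -
  have "shiftF m (qint j) (P u) = (\<Sum>i=1..j. spec_point (i+(m+u)))"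
    by (simp add: shiftF_def qint_def add.assoc)
  also have "\<dots> = qvar^(m+u) * (1 - qvar^j)"
    unfolding sp_sum by (simp add: algebra_simps power_add)
  finally show ?thesis .
qed

lemma prod_rev1: "(\<Prod>j<(k::nat). g (k - j)) = (\<Prod>j=1..k. g j :: 'a::comm_monoid_mult)"
proof (induction k)
  case 0 then show ?case by simp
next
  case (Suc k)
  have "(\<Prod>j<Suc k. g (Suc k - j)) = g (Suc k) * (\<Prod>j<k. g (k - j))"
    by (subst prod.lessThan_Suc_shift) simp
  also have "\<dots> = g (Suc k) * (\<Prod>j=1..k. g j)" using Suc by simp
  also have "\<dots> = (\<Prod>j=1..Suc k. g j)" by (simp add: prod.atLeast1_atMost_eq prod.lessThan_Suc mult.commute)
  finally show ?case .
qed

lemma D_ne0: "(\<Prod>j=1..k. 1 - qvar ^ j) \<noteq> 0"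
  using qvar_pow_ne1 by (auto simp: prod_zero_iff)

lemma qfact_P: "qfact k (P u) = qvar ^ ((\<Sum>j<k. j) + k*u) * (\<Prod>j=1..k. 1 - qvar ^ j)"
proof -
  have "qfact k (P u) = (\<Prod>j<k. qvar^(j+u) * (1 - qvar^(k-j)))"
    by (simp add: qfact_def qint_shift)
  also have "\<dots> = (\<Prod>j<k. qvar^(j+u)) * (\<Prod>j<k. 1 - qvar^(k-j))"
    by (simp add: prod.distrib)
  also have "(\<Prod>j<k. qvar^(j+u)) = qvar ^ (\<Sum>j<k. j+u)" by (simp add: power_sum)
  also have "(\<Sum>j<k. j+u) = (\<Sum>j<k. j) + k*u" by (simp add: sum.distrib)
  also have "(\<Prod>j<k. 1 - qvar^(k-j)) = (\<Prod>j=1..k. 1 - qvar ^ j)" by (rule prod_rev1)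
  finally show ?thesis .
qed

lemma wtset_P:
  assumes "finite S" "0 \<notin> S"
  shows "wtset S (P u) * qvar ^ (\<Sum>j<card S. j) = qvar ^ (\<Sum>s\<in>S. s - 1)"
proof -
  define l where "l = rev (sorted_list_of_set S)"
  have dl: "distinct l" and sl: "set l = S" using assms by (auto simp: l_def)
  have kl: "length l = card S" using dl sl distinct_card by fastforce
  define k where "k = card S"
  define D where "D = (\<Prod>j=1..k. 1 - qvar ^ j)"
  have "(\<Prod>j=1..k. shiftF (l ! (j - 1) - 1) (qint j) (P u))
      = (\<Prod>j=1..k. qvar^(l ! (j - 1) - 1 + u) * (1 - qvar^j))"
    by (simp add: qint_shift)
  also have "\<dots> = (\<Prod>j=1..k. qvar^(l ! (j - 1) - 1 + u)) * D"
    by (simp add: prod.distrib D_def)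
  also have "(\<Prod>j=1..k. qvar^(l ! (j - 1) - 1 + u)) = qvar ^ (\<Sum>j=1..k. l ! (j - 1) - 1 + u)"
    by (simp add: power_sum)
  also have "(\<Sum>j=1..k. l ! (j - 1) - 1 + u) = (\<Sum>j<k. l ! j - 1) + k * u"
    by (simp add: sum.atLeast1_atMost_eq sum.distrib)
  also have "(\<Sum>j<k. l ! j - 1) = sum_list (map (\<lambda>s. s - 1) l)"
    by (simp add: sum_list_sum_nth k_def kl atLeast0LessThan)
  also have "\<dots> = (\<Sum>s\<in>S. s - 1)"
    using dl sl by (simp add: sum_list_distinct_conv_sum_set)
  finally have num: "(\<Prod>j=1..k. shiftF (l ! (j - 1) - 1) (qint j) (P u)) = qvar ^ ((\<Sum>s\<in>S. s - 1) + k*u) * D" .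
  have den: "qfact k (P u) = qvar ^ ((\<Sum>j<k. j) + k*u) * D" by (simp add: qfact_P D_def)
  have "wtset S (P u) = qvar ^ ((\<Sum>s\<in>S. s - 1) + k*u) * D / (qvar ^ ((\<Sum>j<k. j) + k*u) * D)"
    unfolding wtset_def Let_def l_def[symmetric] kl k_def[symmetric] num den ..
  moreover have "D \<noteq> 0" using D_ne0 D_def by simp
  ultimately show ?thesis using qvar_ne0 by (simp add: k_def power_add field_simps)
qed

fun invr :: "nat list \<Rightarrow> nat" where
  "invr [] = 0"
| "invr (x#xs) = length (filter (\<lambda>y. y < x) xs) + invr xs"

lemma inv_count_Cons: "inv_count (x#xs) = length (filter (\<lambda>y. y<x) xs) + inv_count xs"
proof -
  let ?n = "length xs"
  define A where "A = {(i,j). i<j \<and> j < ?n \<and> xs!j < xs!i}"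
  define T where "T = {j. j < ?n \<and> xs!j < x}"
  define B where "B = (\<lambda>j. (0::nat, Suc j)) ` T"
  have eq: "{(i, j). i < j \<and> j < length (x#xs) \<and> (x#xs) ! j < (x#xs) ! i}
      = B \<union> (\<lambda>(i,j). (Suc i, Suc j)) ` A"
  proof (rule set_eqI)
    fix p :: "nat \<times> nat"
    obtain i j where p: "p = (i,j)" by fastforce
    show "p \<in> {(i, j). i < j \<and> j < length (x#xs) \<and> (x#xs) ! j < (x#xs) ! i}
      \<longleftrightarrow> p \<in> B \<union> (\<lambda>(i,j). (Suc i, Suc j)) ` A"
      unfolding p A_def B_def T_def
      by (cases i; cases j) (auto simp: image_iff)
  qed
  have fA: "finite A" unfolding A_def
    by (rule finite_subset[of _ "{..<?n} \<times> {..<?n}"]) auto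
  have disj: "B \<inter> (\<lambda>(i,j). (Suc i, Suc j)) ` A = {}" unfolding B_def by auto
  have cB: "card B = length (filter (\<lambda>y. y<x) xs)"
    unfolding B_def T_def by (subst card_image) (auto simp: inj_on_def length_filter_conv_card)
  have cA: "card ((\<lambda>(i,j). (Suc i, Suc j)) ` A) = card A"
    by (rule card_image) (auto simp: inj_on_def)
  have fB: "finite B" unfolding B_def T_def by simp
  show ?thesis
    unfolding inv_count_def eq
    by (subst card_Un_disjoint) (use fA fB disj cA cB in \<open>auto simp: A_def\<close>)
qed

lemma inv_count_invr: "inv_count w = invr w"
  by (induction w) (simp_all add: inv_count_Cons, simp add: inv_count_def)

fun Gf :: "nat \<Rightarrow> nat list \<Rightarrow> nat" where
  "Gf v [] = 0"
| "Gf v (x#xs) = Gf v xs + length (filter (\<lambda>y. y < v) xs)"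

lemma len_filter_sum: "length (filter p xs) = (\<Sum>i<length xs. if p (xs!i) then 1 else 0)"
  by (induction xs) (simp_all add: sum.lessThan_Suc_shift del: sum.lessThan_Suc)

lemma Gf_sum: "Gf v xs = (\<Sum>i<length xs. if xs!i < v then i else 0)"
proof (induction xs)
  case Nil then show ?case by simp
next
  case (Cons x xs)
  have "(\<Sum>i<length (x#xs). if (x#xs)!i < v then i else 0)
     = (\<Sum>i<length xs. if xs!i < v then Suc i else 0)"
    by (simp add: sum.lessThan_Suc_shift del: sum.lessThan_Suc)
  also have "\<dots> = (\<Sum>i<length xs. if xs!i < v then i else 0) + (\<Sum>i<length xs. if xs!i < v then 1 else 0)"
    by (simp only: sum.distrib[symmetric]) (rule sum.cong, auto)
  finally show ?case using Cons by (simp add: len_filter_sum)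
qed

lemma comb:
  assumes "v \<notin> set ws"
  shows "invr ws + (\<Sum>j<length (filter (\<lambda>y. y < v) ws). j)
     = Gf v ws + invr (filter (\<lambda>y. y < v) ws) + invr (filter (\<lambda>y. v < y) ws)"
  using assms
proof (induction ws)
  case Nil then show ?case by simp
next
  case (Cons x ws)
  then have IH: "invr ws + (\<Sum>j<length (filter (\<lambda>y. y < v) ws). j)
     = Gf v ws + invr (filter (\<lambda>y. y < v) ws) + invr (filter (\<lambda>y. v < y) ws)"
    and xv: "x \<noteq> v" and vws: "v \<notin> set ws" by auto
  show ?case
  proof (cases "x < v")
    case True
    have "filter (\<lambda>y. y < x) (filter (\<lambda>y. y < v) ws) = filter (\<lambda>y. y < x) ws"
      using True by (auto simp: filter_filter intro: filter_cong)
    then show ?thesis using True IH by simp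
  next
    case False
    then have xv': "v < x" using xv by simp
    have "length (filter (\<lambda>y. y < x) ws) = length (filter (\<lambda>y. y < v) ws) + length (filter (\<lambda>y. y < x) (filter (\<lambda>y. v < y) ws))"
      using vws xv'
    proof (induction ws)
      case Nil then show ?case by simp
    next
      case (Cons a ws) then show ?case by auto
    qed
    then show ?thesis using False IH by simp
  qed
qed

lemma invr_map_mono:
  assumes "\<forall>a\<in>set xs. \<forall>b\<in>set xs. (f a < f b) = (a < b)"
  shows "invr (map f xs) = invr xs"
  using assms
proof (induction xs)
  case Nil then show ?case by simp
next
  case (Cons x xs)
  have "filter (\<lambda>y. y < f x) (map f xs) = map f (filter (\<lambda>y. y < x) xs)"
    using Cons.prems unfolding filter_map o_def
    by (intro arg_cong[where f="map f"] filter_cong) auto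
  then show ?case using Cons by simp
qed

lemma main: "distinct w \<Longrightarrow> set w = {1..length w} \<Longrightarrow> wt w (P u) = qvar ^ invr w"
proof (induction "length w" arbitrary: w u rule: less_induct)
  case less
  show ?case
  proof (cases w)
    case Nil then show ?thesis by simp
  next
    case (Cons v ws)
    define n where "n = length w"
    define a where "a = filter (\<lambda>y. y<v) ws"
    define bb where "bb = filter (\<lambda>y. v<y) ws"
    define b where "b = map (\<lambda>y. y - v) bb"
    define c where "c = length a"
    have dws: "distinct ws" "v \<notin> set ws" using less.prems Cons by auto
    have sw: "set (v#ws) = {1..n}" using less.prems Cons n_def by simp
    then have vn: "v \<in> {1..n}" by auto
    have sws: "set ws = {1..n} - {v}" using sw dws by (metis Diff_insert_absorb list.simps(15))
    have sa: "set a = {1..<v}" unfolding a_def set_filter sws using vn by auto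
    have da: "distinct a" using dws by (simp add: a_def)
    have la: "length a = v - 1" using distinct_card[OF da] sa by simp
    have saa: "set a = {1..length a}" using sa la vn by auto
    have sbb: "set bb = {v<..n}" unfolding bb_def set_filter sws using vn by auto
    have dbb: "distinct bb" using dws by (simp add: bb_def)
    have lbb: "length bb = n - v" using distinct_card[OF dbb] sbb by simp
    have injb: "inj_on (\<lambda>y. y - v) (set bb)" using sbb by (auto simp: inj_on_def)
    have db: "distinct b" using dbb injb by (simp add: b_def distinct_map)
    have lb: "length b = n - v" using lbb by (simp add: b_def)
    have sb: "set b = {1..n - v}"
    proof
      show "set b \<subseteq> {1..n - v}" using sbb by (auto simp: b_def)
      show "{1..n - v} \<subseteq> set b"
      proof
        fix z assume z: "z \<in> {1..n - v}"
        then have "z + v \<in> set bb" using sbb by auto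
        then have "(z + v) - v \<in> set b" unfolding b_def set_map by (rule imageI)
        then show "z \<in> set b" by simp
      qed
    qed
    have lw: "length w = Suc (length ws)" using Cons by simp
    have "length a \<le> length ws" by (simp add: a_def)
    then have IHa: "wt a (P u) = qvar ^ invr a"
      using less.hyps[of a u] da saa lw by simp
    have "length b \<le> length ws" by (simp add: b_def bb_def)
    then have IHb: "wt b (P (v+u)) = qvar ^ invr b"
      using less.hyps[of b "v+u"] db sb lb lw by simp
    have ib: "invr b = invr bb" unfolding b_def
      by (rule invr_map_mono) (use sbb in auto)
    define T where "T = {i. i < length ws \<and> ws!i < v}"
    define S where "S = {i + 2 |i. i < length ws \<and> ws ! i < v}"
    have ST: "S = (\<lambda>i. i+2) ` T" by (auto simp: S_def T_def)
    have fT: "finite T" by (simp add: T_def)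
    have cT: "card T = c" by (simp add: T_def c_def a_def length_filter_conv_card)
    have cS: "card S = c" using ST cT by (simp add: card_image inj_on_def)
    have sT: "(\<Sum>i\<in>T. i) = Gf v ws"
    proof -
      have "T = {i \<in> {..<length ws}. ws!i < v}" by (auto simp: T_def)
      then have "(\<Sum>i\<in>T. i) = (\<Sum>i\<in>{i \<in> {..<length ws}. ws!i < v}. i)" by simp
      also have "\<dots> = (\<Sum>i<length ws. if ws!i < v then i else 0)" by (rule sum.inter_filter) simp
      finally show ?thesis by (simp add: Gf_sum)
    qed
    have sucT: "(\<Sum>i\<in>T. Suc i) = (\<Sum>i\<in>T. i) + card T"
      by (induction T rule: infinite_finite_induct) auto
    have sS: "(\<Sum>s\<in>S. s - 1) = Gf v ws + c"
      using ST sT cT sucT by (simp add: sum.reindex inj_on_def sum.distrib)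
    have W: "wtset S (P u) * qvar ^ (\<Sum>j<c. j) = qvar ^ (Gf v ws + c)"
      using wtset_P[of S u] ST fT cS sS by auto
    have cmb: "invr ws + (\<Sum>j<c. j) = Gf v ws + invr a + invr bb"
      using comb[OF dws(2)] by (simp add: c_def a_def bb_def)
    have sh: "shiftF v (wt b) (P u) = wt b (P (v+u))"
      unfolding shiftF_def by (rule arg_cong[where f="wt b"], rule ext, simp only: add.assoc)
    have wtw0: "wt w (P u) = wtset S (P u) * wt a (P u) * shiftF v (wt b) (P u)"
      unfolding Cons wt.simps S_def a_def b_def bb_def by (rule refl)
    define X where "X = wtset S (P u)"
    have wtw: "wt w (P u) = X * qvar ^ invr a * qvar ^ invr bb"
      unfolding wtw0 sh IHa IHb ib X_def by (rule refl)
    have iw: "invr w = c + invr ws" using Cons by (simp add: c_def a_def)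
    have W': "X * qvar ^ (\<Sum>j<c. j) = qvar ^ (Gf v ws + c)" using W X_def by simp
    have "wt w (P u) * qvar ^ (\<Sum>j<c. j) = qvar ^ invr w * qvar ^ (\<Sum>j<c. j)"
    proof -
      have "wt w (P u) * qvar ^ (\<Sum>j<c. j) = (X * qvar ^ (\<Sum>j<c. j)) * qvar ^ invr a * qvar ^ invr bb"
        unfolding wtw by (simp only: mult.assoc mult.commute mult.left_commute)
      also have "\<dots> = qvar ^ (Gf v ws + c + invr a + invr bb)" unfolding W' by (simp only: power_add)
      also have "Gf v ws + c + invr a + invr bb = invr w + (\<Sum>j<c. j)" using cmb iw by simp
      finally show ?thesis by (simp only: power_add)
    qed
    then show ?thesis using qvar_ne0 by simp
  qed
qed

theorem corollary5p4:
  fixes w :: "nat list"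
  assumes "distinct w" and "set w = {1..length w}"
  shows "wt w spec_point = qvar ^ inv_count w"
  using main[OF assms, of 0] by (simp add: inv_count_invr)

end
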